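(* Let $R$ be a reflexive relation on $U$. The set of atoms of $\mathrm{DM(RS)}$ is $\{(\{x\}^{\blacktriangledown},\{x\}^{\blacktriangle})\mid x\in U,\ \{x\}^{\blacktriangle}\text{ is an atom of }\wp(U)^{\blacktriangle}\}$.
   Context: Let $U$ be a set and $R\subseteq U\times U$ a binary relation. For $x\in U$, $R(x)=\{y\in U\mid (x,y)\in R\}$ and $\breve R(x)=\{y\in U\mid (y,x)\in R\}$. For $X\subseteq U$: $X^{\blacktriangledown}=\{x\in U\mid R(x)\subseteq X\}$, $X^{\blacktriangle}=\{x\in U\mid R(x)\cap X\neq\emptyset\}$, $X^{\triangledown}=\{x\in U\mid \breve R(x)\subseteq X\}$, $X^{\vartriangle}=\{x\in U\mid \breve R(x)\cap X\neq\emptyset\}$; composites like $X^{\vartriangle\blacktriangledown}$ mean $(X^{\vartriangle})^{\blacktriangledown}$. $\wp(U)^{\blacktriangledown}=\{X^{\blacktriangledown}\mid X\subseteq U\}$, $\wp(U)^{\blacktriangle}=\{X^{\blacktriangle}\mid X\subseteq U\}$, complete lattices under $\subseteq$ with least element $\emptyset$. $\mathcal S=\{x\in U\mid |R(x)|=1\}$. $\mathrm{RS}=\{(X^{\blacktriangledown},X^{\blacktriangle})\mid X\subseteq U\}$ ordered coordinatewise; $\mathrm{DM(RS)}$ is its Dedekind–MacNeille completion, identified with $\{(A,B)\in\wp(U)^{\blacktriangledown}\times\wp(U)^{\blacktriangle}\mid A^{\vartriangle\blacktriangle}\subseteq B,\ A\cap\mathcal S=B\cap\mathcal S\}$ ordered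 coordinatewise (least element $(\emptyset,\emptyset)$), with meets $\bigwedge_i(X_i,Y_i)=(\bigcap_iX_i,(\bigcap_iY_i)^{\triangledown\blacktriangle})$ and joins $\bigvee_i(X_i,Y_i)=((\bigcup_iX_i)^{\vartriangle\blacktriangledown},\bigcup_iY_i)$. An atom of a lattice with least element $0$ is an element covering $0$. *)

theory Defs
  imports Main
begin

definition bdown :: "'a set \<Rightarrow> 'a rel \<Rightarrow> 'a set \<Rightarrow> 'a set" where
  "bdown U R X = {x \<in> U. R `` {x} \<subseteq> X}"

definition bup :: "'a set \<Rightarrow> 'a rel \<Rightarrow> 'a set \<Rightarrow> 'a set" where
  "bup U R X = {x \<in> U. R `` {x} \<inter> X \<noteq> {}}"

definition wdown :: "'a set \<Rightarrow> 'a rel \<Rightarrow> 'a set \<Rightarrow> 'a set" where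
  "wdown U R X = {x \<in> U. converse R `` {x} \<subseteq> X}"

definition wup :: "'a set \<Rightarrow> 'a rel \<Rightarrow> 'a set \<Rightarrow> 'a set" where
  "wup U R X = {x \<in> U. converse R `` {x} \<inter> X \<noteq> {}}"

definition single_pts :: "'a set \<Rightarrow> 'a rel \<Rightarrow> 'a set" where
  "single_pts U R = {x \<in> U. card (R `` {x}) = 1}"

definition bdown_sets :: "'a set \<Rightarrow> 'a rel \<Rightarrow> 'a set set" where
  "bdown_sets U R = {bdown U R X | X. X \<subseteq> U}"

definition bup_sets :: "'a set \<Rightarrow> 'a rel \<Rightarrow> 'a set set" where
  "bup_sets U R = {bup U R X | X. X \<subseteq> U}"

text \<open>DM(RS), in its identified form, ordered coordinatewise.\<close>
definition DM_RS :: "'a set \<Rightarrow> 'a rel \<Rightarrow> ('a set \<times> 'a set) set" where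
  "DM_RS U R = {(A, B). A \<in> bdown_sets U R \<and> B \<in> bup_sets U R \<and>
      bup U R (wup U R A) \<subseteq> B \<and> A \<inter> single_pts U R = B \<inter> single_pts U R}"

definition pair_le :: "('a set \<times> 'a set) \<Rightarrow> ('a set \<times> 'a set) \<Rightarrow> bool" where
  "pair_le p q \<longleftrightarrow> fst p \<subseteq> fst q \<and> snd p \<subseteq> snd q"

definition is_atom :: "'b set \<Rightarrow> ('b \<Rightarrow> 'b \<Rightarrow> bool) \<Rightarrow> 'b \<Rightarrow> 'b \<Rightarrow> bool" where
  "is_atom P le z a \<longleftrightarrow> a \<in> P \<and> a \<noteq> z \<and> le z a \<and>
     \<not> (\<exists>b\<in>P. le z b \<and> le b a \<and> b \<noteq> z \<and> b \<noteq> a)"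

end

theory Submission
  imports Defs
begin

locale rr =
  fixes U :: "'a set" and R :: "'a rel"
  assumes sub: "R \<subseteq> U \<times> U" and rf: "\<forall>x\<in>U. (x, x) \<in> R"
begin

lemma S_iff: "y \<in> single_pts U R \<longleftrightarrow> y \<in> U \<and> R `` {y} = {y}"
proof
  assume "y \<in> single_pts U R"
  then have y: "y \<in> U" and c: "card (R``{y}) = 1" by (auto simp: single_pts_def)
  from c obtain z where z: "R``{y} = {z}" by (auto simp: card_1_singleton_iff)
  from y rf have "y \<in> R``{y}" by auto
  with z y show "y \<in> U \<and> R `` {y} = {y}" by auto
qed (auto simp: single_pts_def)

lemma down1: "x \<in> U \<Longrightarrow> bdown U R {x} = (if R``{x} = {x} then {x} else {})"
  using rf by (auto simp: bdown_def)

lemma x_in_up: "x \<in> U \<Longrightarrow> x \<in> bup U R {x}"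
  using rf by (auto simp: bup_def)

lemma DM_sub: "(A, B) \<in> DM_RS U R \<Longrightarrow> A \<subseteq> B"
proof
  fix a assume d: "(A, B) \<in> DM_RS U R" and a: "a \<in> A"
  then obtain X where "A = bdown U R X" by (auto simp: DM_RS_def bdown_sets_def)
  with a have aU: "a \<in> U" by (auto simp: bdown_def)
  with a rf have "a \<in> wup U R A" by (auto simp: wup_def)
  with aU rf have "a \<in> bup U R (wup U R A)" by (auto simp: bup_def)
  with d show "a \<in> B" by (auto simp: DM_RS_def)
qed

lemma mem: "x \<in> U \<Longrightarrow> (bdown U R {x}, bup U R {x}) \<in> DM_RS U R"
proof -
  assume x: "x \<in> U"
  have 1: "bdown U R {x} \<in> bdown_sets U R" using x by (auto simp: bdown_sets_def)
  have 2: "bup U R {x} \<in> bup_sets U R" using x by (auto simp: bup_sets_def)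
  have 3: "bup U R (wup U R (bdown U R {x})) \<subseteq> bup U R {x}"
  proof (cases "R``{x} = {x}")
    case True
    then have "wup U R {x} = {x}" using x by (auto simp: wup_def)
    then show ?thesis using True x by (simp add: down1)
  next
    case False
    then show ?thesis using x by (simp add: down1 wup_def bup_def)
  qed
  have 4: "bdown U R {x} \<inter> single_pts U R = bup U R {x} \<inter> single_pts U R"
  proof
    show "bdown U R {x} \<inter> single_pts U R \<subseteq> bup U R {x} \<inter> single_pts U R"
      using x x_in_up by (auto simp: down1 split: if_splits)
  next
    show "bup U R {x} \<inter> single_pts U R \<subseteq> bdown U R {x} \<inter> single_pts U R"
    proof
      fix y assume "y \<in> bup U R {x} \<inter> single_pts U R"
      then have "(y, x) \<in> R" "y \<in> U" "R``{y} = {y}" by (auto simp: bup_def S_iff)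
      then have "y = x" by auto
      with \<open>R``{y} = {y}\<close> x show "y \<in> bdown U R {x} \<inter> single_pts U R"
        by (auto simp: down1 S_iff)
    qed
  qed
  show ?thesis using 1 2 3 4 by (simp add: DM_RS_def)
qed

lemma bup_ne: "b \<in> bup_sets U R \<Longrightarrow> b \<noteq> {} \<Longrightarrow> \<exists>y\<in>U. bup U R {y} \<subseteq> b"
proof -
  assume "b \<in> bup_sets U R" "b \<noteq> {}"
  then obtain X where X: "b = bup U R X" and z: "\<exists>z. z \<in> b" by (auto simp: bup_sets_def)
  then obtain z y where "y \<in> X" "(z, y) \<in> R" by (auto simp: bup_def)
  then have "y \<in> U" "bup U R {y} \<subseteq> b" using sub X by (auto simp: bup_def)
  then show ?thesis by blast
qed

lemma below: "(A, B) \<in> DM_RS U R \<Longrightarrow> x \<in> U \<Longrightarrow> bup U R {x} \<subseteq> B \<Longrightarrow> bdown U R {x} \<subseteq> A"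
proof (cases "R``{x} = {x}")
  case True
  assume d: "(A, B) \<in> DM_RS U R" and x: "x \<in> U" and s: "bup U R {x} \<subseteq> B"
  have "x \<in> B \<inter> single_pts U R" using s x_in_up[OF x] True x by (auto simp: S_iff)
  with d have "x \<in> A" by (auto simp: DM_RS_def)
  then show ?thesis using True x by (simp add: down1)
qed (simp add: down1)

lemma B_empty: "(A, B) \<in> DM_RS U R \<Longrightarrow> B = {} \<Longrightarrow> A = {}"
  using DM_sub by blast

end

theorem mainTheorem3:
  fixes U :: "'a set" and R :: "'a rel"
  assumes "R \<subseteq> U \<times> U"
    and "\<forall>x\<in>U. (x, x) \<in> R"
  shows "{a. is_atom (DM_RS U R) pair_le ({}, {}) a} =
         {(bdown U R {x}, bup U R {x}) | x. x \<in> U \<and>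
            is_atom (bup_sets U R) (\<subseteq>) {} (bup U R {x})}"
proof -
  interpret rr U R using assms by unfold_locales
  show ?thesis
  proof (intro set_eqI iffI)
    fix p assume "p \<in> {a. is_atom (DM_RS U R) pair_le ({}, {}) a}"
    then obtain A B where p: "p = (A, B)" and d: "(A, B) \<in> DM_RS U R" and nz: "(A, B) \<noteq> ({}, {})"
      and mn: "\<And>b. b \<in> DM_RS U R \<Longrightarrow> pair_le b (A, B) \<Longrightarrow> b = ({}, {}) \<or> b = (A, B)"
      unfolding is_atom_def pair_le_def by (cases p) fastforce
    have Bne: "B \<noteq> {}" using nz B_empty[OF d] by auto
    have Bs: "B \<in> bup_sets U R" using d by (auto simp: DM_RS_def)
    obtain x where x: "x \<in> U" and xs: "bup U R {x} \<subseteq> B" using bup_ne[OF Bs Bne] by blast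
    have key: "\<And>y. y \<in> U \<Longrightarrow> bup U R {y} \<subseteq> B \<Longrightarrow> (bdown U R {y}, bup U R {y}) = (A, B)"
    proof -
      fix y assume y: "y \<in> U" and ys: "bup U R {y} \<subseteq> B"
      have "pair_le (bdown U R {y}, bup U R {y}) (A, B)"
        using below[OF d y ys] ys by (simp add: pair_le_def)
      moreover have "(bdown U R {y}, bup U R {y}) \<noteq> ({}, {})" using x_in_up[OF y] by auto
      ultimately show "(bdown U R {y}, bup U R {y}) = (A, B)" using mn mem[OF y] by blast
    qed
    have e: "(bdown U R {x}, bup U R {x}) = (A, B)" using key[OF x xs] .
    have "is_atom (bup_sets U R) (\<subseteq>) {} (bup U R {x})"
      unfolding is_atom_def
    proof (intro conjI)
      show "bup U R {x} \<in> bup_sets U R" using x by (auto simp: bup_sets_def)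
      show "bup U R {x} \<noteq> {}" using x_in_up[OF x] by auto
      show "\<not> (\<exists>b\<in>bup_sets U R. {} \<subseteq> b \<and> b \<subseteq> bup U R {x} \<and> b \<noteq> {} \<and> b \<noteq> bup U R {x})"
      proof
        assume "\<exists>b\<in>bup_sets U R. {} \<subseteq> b \<and> b \<subseteq> bup U R {x} \<and> b \<noteq> {} \<and> b \<noteq> bup U R {x}"
        then obtain b where b: "b \<in> bup_sets U R" "b \<subseteq> bup U R {x}" "b \<noteq> {}" "b \<noteq> bup U R {x}" by blast
        obtain y where y: "y \<in> U" "bup U R {y} \<subseteq> b" using bup_ne[OF b(1) b(3)] by blast
        have "bup U R {y} = B" using key[OF y(1)] y(2) b(2) e by auto
        then show False using e b y by auto
      qed
    qed simp
    then show "p \<in> {(bdown U R {x}, bup U R {x}) | x. x \<in> U \<and>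
            is_atom (bup_sets U R) (\<subseteq>) {} (bup U R {x})}" using e p x by auto
  next
    fix p assume "p \<in> {(bdown U R {x}, bup U R {x}) | x. x \<in> U \<and>
            is_atom (bup_sets U R) (\<subseteq>) {} (bup U R {x})}"
    then obtain x where p: "p = (bdown U R {x}, bup U R {x})" and x: "x \<in> U"
      and at: "is_atom (bup_sets U R) (\<subseteq>) {} (bup U R {x})" by blast
    have "is_atom (DM_RS U R) pair_le ({}, {}) (bdown U R {x}, bup U R {x})"
      unfolding is_atom_def
    proof (intro conjI)
      show "(bdown U R {x}, bup U R {x}) \<in> DM_RS U R" using mem[OF x] .
      show "(bdown U R {x}, bup U R {x}) \<noteq> ({}, {})" using x_in_up[OF x] by auto
      show "pair_le ({}, {}) (bdown U R {x}, bup U R {x})" by (simp add: pair_le_def)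
      show "\<not> (\<exists>b\<in>DM_RS U R. pair_le ({}, {}) b \<and> pair_le b (bdown U R {x}, bup U R {x}) \<and>
              b \<noteq> ({}, {}) \<and> b \<noteq> (bdown U R {x}, bup U R {x}))"
      proof
        assume "\<exists>b\<in>DM_RS U R. pair_le ({}, {}) b \<and> pair_le b (bdown U R {x}, bup U R {x}) \<and>
              b \<noteq> ({}, {}) \<and> b \<noteq> (bdown U R {x}, bup U R {x})"
        then obtain A B where d: "(A, B) \<in> DM_RS U R" and le: "A \<subseteq> bdown U R {x}" "B \<subseteq> bup U R {x}"
          and nz: "(A, B) \<noteq> ({}, {})" and ne: "(A, B) \<noteq> (bdown U R {x}, bup U R {x})"
        proof -
          obtain b where "b \<in> DM_RS U R" "pair_le b (bdown U R {x}, bup U R {x})"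
            "b \<noteq> ({}, {})" "b \<noteq> (bdown U R {x}, bup U R {x})" using \<open>\<exists>b\<in>_. _\<close> by blast
          then show thesis using that by (cases b) (simp add: pair_le_def)
        qed
        have Bne: "B \<noteq> {}" using nz B_empty[OF d] by auto
        have Bs: "B \<in> bup_sets U R" using d by (auto simp: DM_RS_def)
        have Beq: "B = bup U R {x}" using at Bs le(2) Bne unfolding is_atom_def by blast
        have "bdown U R {x} \<subseteq> A" using below[OF d x] Beq by simp
        then show False using le ne Beq by auto
      qed
    qed
    then show "p \<in> {a. is_atom (DM_RS U R) pair_le ({}, {}) a}" using p by simp
  qed
qed

end
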